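(* For every prime power $q$ there exists an $[n,2]_q$ MWS code with $n=\frac{q(q+1)}{2}=\left\lceil\frac{q\,\theta_q(1)}{2}\right\rceil$; hence the lower bound $n\ge\lceil q\theta_q(k-1)/2\rceil$ for $[n,k]_q$ MWS codes with $k\ge2$ is attained when $k=2$.
   Context: An $[n,k]_q$ code is a $k$-dimensional subspace of $\mathbb{F}_q^n$, non-degenerate (no coordinate identically zero on the code). $\theta_q(m)=\frac{q^{m+1}-1}{q-1}$, so $\theta_q(1)=q+1$. The code is MWS if the set of its non-zero Hamming weights has cardinality $\theta_q(k-1)$. *)

theory Defs
  imports Complex_Main "HOL-Library.Cardinality"
begin

text \<open>Vectors of length n over a field are modelled as functions nat \<Rightarrow> 'a
  vanishing outside {0..<n}. A family of k vectors is g :: nat \<Rightarrow> nat \<Rightarrow> 'a,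
  with g j the j-th vector (j < k).\<close>

definition theta :: "nat \<Rightarrow> nat \<Rightarrow> nat" where
  "theta q m = (q ^ (m + 1) - 1) div (q - 1)"

definition lin_comb :: "nat \<Rightarrow> (nat \<Rightarrow> nat \<Rightarrow> 'a::field) \<Rightarrow> (nat \<Rightarrow> 'a) \<Rightarrow> (nat \<Rightarrow> 'a)" where
  "lin_comb k g c = (\<lambda>i. \<Sum>j<k. c j * g j i)"

definition lin_indep_fam :: "nat \<Rightarrow> (nat \<Rightarrow> nat \<Rightarrow> 'a::field) \<Rightarrow> bool" where
  "lin_indep_fam k g \<longleftrightarrow> (\<forall>c. lin_comb k g c = (\<lambda>_. 0) \<longrightarrow> (\<forall>j<k. c j = 0))"

definition span_fam :: "nat \<Rightarrow> (nat \<Rightarrow> nat \<Rightarrow> 'a::field) \<Rightarrow> (nat \<Rightarrow> 'a) set" where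
  "span_fam k g = {lin_comb k g c | c. True}"

definition is_code :: "nat \<Rightarrow> nat \<Rightarrow> (nat \<Rightarrow> 'a::field) set \<Rightarrow> bool" where
  "is_code n k C \<longleftrightarrow>
     (\<exists>g. (\<forall>j<k. \<forall>i\<ge>n. g j i = 0) \<and> lin_indep_fam k g \<and> C = span_fam k g)
     \<and> (\<forall>i<n. \<exists>v\<in>C. v i \<noteq> 0)"

definition hamming_wt :: "nat \<Rightarrow> (nat \<Rightarrow> 'a::zero) \<Rightarrow> nat" where
  "hamming_wt n v = card {i. i < n \<and> v i \<noteq> 0}"

definition is_MWS_code :: "nat \<Rightarrow> nat \<Rightarrow> (nat \<Rightarrow> 'a::{finite,field}) set \<Rightarrow> bool" where
  "is_MWS_code n k C \<longleftrightarrow> is_code n k C \<and>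
     card {hamming_wt n v | v. v \<in> C \<and> v \<noteq> (\<lambda>_. 0)} = theta (card (UNIV :: 'a set)) (k - 1)"

end

theory Submission
  imports Defs
begin

lemma tri_sum: "2 * (\<Sum>a<(q::nat). a+1) = q*(q+1)"
  by (induction q) (auto simp: algebra_simps)

lemma card_ge2: "CARD('a::{finite,field}) \<ge> 2"
proof -
  have "card {0::'a, 1} = 2" by simp
  moreover have "card {0::'a,1} \<le> CARD('a)" by (rule card_mono) auto
  ultimately show ?thesis by simp
qed

lemma lc2: "lin_comb 2 g c = (\<lambda>i. c 0 * g 0 i + c 1 * g 1 i)"
  unfolding lin_comb_def by (simp add: numeral_2_eq_2)

lemma lin_root: "(b::'a::field) \<noteq> 0 \<Longrightarrow> (a + b * x = 0) = (x = - a / b)"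
proof -
  assume b: "b \<noteq> 0"
  have "(a + b * x = 0) = (b * x = - a)" by (metis add_eq_0_iff2 add.commute)
  also have "\<dots> = (x = - a / b)" using b by (auto simp: field_simps)
  finally show ?thesis .
qed

lemma card_lt_diff: "card ({..<(n::nat)} - {i. i < n \<and> P i}) = n - card {i. i < n \<and> P i}"
  by (subst card_Diff_subset) auto

lemma theta1: assumes q2: "q \<ge> 2" shows "theta q 1 = q + 1"
proof -
  obtain r where r: "q = Suc (Suc r)" using assms by (metis add_2_eq_Suc le_Suc_ex)
  have "q^(1+1) - 1 = (q+1)*(q-1)" unfolding r by (simp add: power2_eq_square algebra_simps)
  moreover have "q - 1 > 0" using assms by simp
  ultimately show ?thesis unfolding theta_def by (metis nonzero_mult_div_cancel_right less_not_refl2 Nat.add_diff_assoc)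
qed

theorem mainTheorem12:
  shows "(\<exists>C :: (nat \<Rightarrow> 'a::{finite,field}) set.
            is_MWS_code (CARD('a) * (CARD('a) + 1) div 2) 2 C)
         \<and> CARD('a) * (CARD('a) + 1) div 2
             = nat \<lceil>real (CARD('a) * theta CARD('a) 1) / 2\<rceil>"
proof
  define q where "q = CARD('a)"
  have q2: "q \<ge> 2" unfolding q_def by (rule card_ge2)
  have th: "theta q 1 = q + 1" using q2 by (rule theta1)
  have ev: "even (q*(q+1))" by simp
  then have "real (q * (q+1)) / 2 = real (q*(q+1) div 2)"
    by (simp add: real_of_nat_div)
  then show "CARD('a) * (CARD('a) + 1) div 2
             = nat \<lceil>real (CARD('a) * theta CARD('a) 1) / 2\<rceil>"
    using th unfolding q_def by simp
next
  define q where "q = CARD('a)"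
  have q2: "q \<ge> 2" unfolding q_def by (rule card_ge2)
  define n where "n = q * (q+1) div 2"
  define S where "S = {(a::nat,b::nat). b \<le> a \<and> a < q}"
  have SS: "S = (SIGMA a:{..<q}. {..a})" unfolding S_def by auto
  have cS: "card S = n" unfolding SS n_def
    using tri_sum[of q] by simp
  obtain e :: "nat \<Rightarrow> 'a" where e: "bij_betw e {0..<q} (UNIV :: 'a set)"
    using ex_bij_betw_nat_finite[of "UNIV :: 'a set"] unfolding q_def by auto
  obtain h where h: "bij_betw h {0..<n} S"
  proof -
    have "finite S" unfolding SS by simp
    then show ?thesis using ex_bij_betw_nat_finite[of S] cS that by auto
  qed
  have einj: "\<And>a b. a < q \<Longrightarrow> b < q \<Longrightarrow> e a = e b \<Longrightarrow> a = b"
    using e unfolding bij_betw_def inj_on_def by auto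
  have esurj: "\<And>x. \<exists>t<q. e t = x"
    using e unfolding bij_betw_def by (metis atLeastLessThan_iff imageE UNIV_I)
  have hS: "\<And>i. i < n \<Longrightarrow> h i \<in> S" using h unfolding bij_betw_def by auto
  have hfq: "\<And>i. i < n \<Longrightarrow> fst (h i) < q" 
  proof -
    fix i assume "i < n"
    then show "fst (h i) < q" using hS[of i] by (cases "h i") (simp add: S_def)
  qed
  define g :: "nat \<Rightarrow> nat \<Rightarrow> 'a" where
    "g = (\<lambda>j i. if i < n then (if j = 0 then 1 else e (fst (h i))) else 0)"
  define C where "C = span_fam 2 g"
  have fib: "card {i. i < n \<and> fst (h i) = t} = t + 1" if "t < q" for t
  proof -
    have "h ` {i. i < n \<and> fst (h i) = t} = {p\<in>S. fst p = t}"
    proof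
      show "h ` {i. i < n \<and> fst (h i) = t} \<subseteq> {p\<in>S. fst p = t}" using hS by auto
      show "{p\<in>S. fst p = t} \<subseteq> h ` {i. i < n \<and> fst (h i) = t}"
      proof
        fix p assume p: "p \<in> {p\<in>S. fst p = t}"
        then obtain i where "i \<in> {0..<n}" "p = h i" using h unfolding bij_betw_def by (metis (no_types, lifting) imageE mem_Collect_eq)
        then show "p \<in> h ` {i. i < n \<and> fst (h i) = t}" using p by auto
      qed
    qed
    moreover have "inj_on h {i. i < n \<and> fst (h i) = t}"
      using h unfolding bij_betw_def by (rule conjE) (erule inj_on_subset, auto)
    ultimately have "card {i. i < n \<and> fst (h i) = t} = card {p\<in>S. fst p = t}"
      using card_image by fastforce
    also have "{p\<in>S. fst p = t} = (\<lambda>b. (t,b)) ` {..t}"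
      unfolding S_def using that by auto
    also have "card \<dots> = t + 1" by (subst card_image) (auto simp: inj_on_def)
    finally show ?thesis .
  qed
  have nq: "q \<le> n"
  proof -
    have "q * 2 \<le> q * (q+1)" using q2 by (intro mult_le_mono2) simp
    then show ?thesis unfolding n_def by (metis div_le_mono nonzero_mult_div_cancel_right zero_neq_numeral)
  qed
  obtain i0 where i0: "i0 < n" "h i0 = (0,0)"
  proof -
    have "(0,0) \<in> S" using q2 unfolding S_def by auto
    then obtain i where "i \<in> {0..<n}" "h i = (0,0)" using h unfolding bij_betw_def by (metis imageE)
    then show ?thesis using that by auto
  qed
  obtain i1 where i1: "i1 < n" "h i1 = (1,0)"
  proof -
    have "(1,0) \<in> S" using q2 unfolding S_def by auto
    then obtain i where "i \<in> {0..<n}" "h i = (1,0)" using h unfolding bij_betw_def by (metis imageE)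
    then show ?thesis using that by auto
  qed
  have e01: "e 0 \<noteq> e 1" using einj[of 0 1] q2 by auto
  have code: "is_code n 2 C"
    unfolding is_code_def
  proof (intro conjI exI allI impI)
    show "\<And>j i. j < 2 \<Longrightarrow> n \<le> i \<Longrightarrow> g j i = 0" unfolding g_def by auto
    show "lin_indep_fam 2 g" unfolding lin_indep_fam_def lc2
    proof (intro allI impI)
      fix c :: "nat \<Rightarrow> 'a" and j :: nat
      assume z: "(\<lambda>i. c 0 * g 0 i + c 1 * g 1 i) = (\<lambda>_. 0)" and j: "j < 2"
      have a: "c 0 + c 1 * e 0 = 0" using fun_cong[OF z, of i0] i0 by (simp add: g_def)
      have b: "c 0 + c 1 * e 1 = 0" using fun_cong[OF z, of i1] i1 by (simp add: g_def)
      have "c 1 * (e 0 - e 1) = (c 0 + c 1 * e 0) - (c 0 + c 1 * e 1)" by (simp add: algebra_simps)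
      then have "c 1 * (e 0 - e 1) = 0" using a b by (simp only: diff_self)
      then have c1: "c 1 = 0" using e01 by simp
      then have "c 0 = 0" using a by simp
      then show "c j = 0" using c1 j by (cases j) (auto simp: numeral_2_eq_2 less_Suc_eq)
    qed
    show "C = span_fam 2 g" by (simp add: C_def)
    fix i assume i: "i < n"
    show "\<exists>v\<in>C. v i \<noteq> 0"
    proof
      show "lin_comb 2 g (\<lambda>j. if j = 0 then 1 else 0) \<in> C" unfolding C_def span_fam_def by auto
      show "lin_comb 2 g (\<lambda>j. if j = 0 then 1 else 0) i \<noteq> 0" using i unfolding lc2 g_def by simp
    qed
  qed
  have W: "{hamming_wt n v | v. v \<in> C \<and> v \<noteq> (\<lambda>_. 0)} = (\<lambda>s. n - s) ` {..q}"
  proof (rule set_eqI, rule iffI)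
    fix w assume "w \<in> {hamming_wt n v | v. v \<in> C \<and> v \<noteq> (\<lambda>_. 0)}"
    then obtain c where v0: "lin_comb 2 g c \<noteq> (\<lambda>_. 0)" and w: "w = hamming_wt n (lin_comb 2 g c)"
      unfolding C_def span_fam_def by auto
    show "w \<in> (\<lambda>s. n - s) ` {..q}"
    proof (cases "c 1 = 0")
      case True
      then have "c 0 \<noteq> 0" using v0 unfolding lc2 by auto
      then have "{i. i < n \<and> lin_comb 2 g c i \<noteq> 0} = {..<n}" using True unfolding lc2 g_def by auto
      then have "w = n - 0" using w unfolding hamming_wt_def by simp
      then show ?thesis by blast
    next
      case False
      obtain t where t: "t < q" "e t = - c 0 / c 1" using esurj by blast
      have "\<And>i. i < n \<Longrightarrow> (lin_comb 2 g c i = 0) = (fst (h i) = t)"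
      proof -
        fix i assume i: "i < n"
        have "(lin_comb 2 g c i = 0) = (c 0 + c 1 * e (fst (h i)) = 0)" using i unfolding lc2 g_def by simp
        also have "\<dots> = (e (fst (h i)) = e t)" using lin_root[OF False] t(2) by simp
        also have "\<dots> = (fst (h i) = t)" using einj[OF hfq[OF i] t(1)] by auto
        finally show "(lin_comb 2 g c i = 0) = (fst (h i) = t)" .
      qed
      then have "{i. i < n \<and> lin_comb 2 g c i \<noteq> 0} = {..<n} - {i. i < n \<and> fst (h i) = t}" by auto
      then have "w = n - (t+1)" using w fib[OF t(1)] unfolding hamming_wt_def
        by (simp add: card_lt_diff)
      then show ?thesis using t(1) by (intro image_eqI[of _ _ "t+1"]) auto
    qed
  next
    fix w assume "w \<in> (\<lambda>s. n - s) ` {..q}"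
    then obtain s where s: "s \<le> q" "w = n - s" by auto
    show "w \<in> {hamming_wt n v | v. v \<in> C \<and> v \<noteq> (\<lambda>_. 0)}"
    proof (cases s)
      case 0
      let ?v = "lin_comb 2 g (\<lambda>j. if j = 0 then 1 else 0)"
      have "{i. i < n \<and> ?v i \<noteq> 0} = {..<n}" unfolding lc2 g_def by auto
      then have "hamming_wt n ?v = w" using s 0 unfolding hamming_wt_def by simp
      moreover have "?v \<in> C" unfolding C_def span_fam_def by auto
      moreover have "?v \<noteq> (\<lambda>_. 0)" using fun_cong[of ?v "\<lambda>_. 0" i0] i0 unfolding lc2 g_def by auto
      ultimately show ?thesis by (intro CollectI exI[of _ ?v] conjI) simp_all
    next
      case (Suc t)
      then have t: "t < q" using s by simp
      define c :: "nat \<Rightarrow> 'a" where "c = (\<lambda>j. if j = 0 then - e t else 1)"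
      let ?v = "lin_comb 2 g c"
      have "\<And>i. i < n \<Longrightarrow> (?v i = 0) = (fst (h i) = t)"
      proof -
        fix i assume i: "i < n"
        have "(?v i = 0) = (e (fst (h i)) = e t)" using i unfolding lc2 g_def c_def by (simp add: add_eq_0_iff2)
        also have "\<dots> = (fst (h i) = t)" using einj[OF hfq[OF i] t] by auto
        finally show "(?v i = 0) = (fst (h i) = t)" .
      qed
      then have eq: "{i. i < n \<and> ?v i \<noteq> 0} = {..<n} - {i. i < n \<and> fst (h i) = t}" by auto
      then have "hamming_wt n ?v = w" using s Suc fib[OF t] unfolding hamming_wt_def
        by (simp add: card_lt_diff)
      moreover have "?v \<in> C" unfolding C_def span_fam_def by auto
      moreover have "?v \<noteq> (\<lambda>_. 0)"
      proof
        assume "?v = (\<lambda>_. 0)"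
        then have "{i. i < n \<and> ?v i \<noteq> 0} = {}" by simp
        with eq have "{..<n} \<subseteq> {i. i < n \<and> fst (h i) = t}" by auto
        then have "n \<le> t + 1" using fib[OF t] card_mono[of "{i. i < n \<and> fst (h i) = t}" "{..<n}"]
          by auto
        moreover have "i0 \<noteq> i1" using i0 i1 by auto
        moreover have "fst (h i0) \<noteq> fst (h i1)" using i0 i1 by simp
        ultimately have "i0 \<notin> {i. i < n \<and> fst (h i) = t} \<or> i1 \<notin> {i. i < n \<and> fst (h i) = t}" by auto
        then show False using \<open>{..<n} \<subseteq> {i. i < n \<and> fst (h i) = t}\<close> i0(1) i1(1) by auto
      qed
      ultimately show ?thesis by (intro CollectI exI[of _ ?v] conjI) simp_all
    qed
  qed
  have "card ((\<lambda>s. n - s) ` {..q}) = q + 1"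
    by (subst card_image) (use nq in \<open>auto simp: inj_on_def\<close>)
  then have "is_MWS_code n 2 C"
    unfolding is_MWS_code_def using code W q_def theta1[OF q2] by simp
  then show "\<exists>C :: (nat \<Rightarrow> 'a) set. is_MWS_code (CARD('a) * (CARD('a) + 1) div 2) 2 C"
    unfolding n_def q_def by blast
qed

end
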